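(* For each integer $l\ge0$, define $$R_l(z)=2i\,p_l(z)p_l(-z)+p_l'(z)p_l(-z)+p_l'(-z)p_l(z)+2i\,z^{2l}.$$ Then $R_l(z)=0$ identically, and consequently $$G_l(z)-G_l(-z)=-2i\,z^{2l+1}\,\frac{1}{p_l(z)\,p_l(-z)}.$$
   Context: $p_l(z)=\sum_{n=0}^l\frac{i^{-n-1}}{2^{l-n}}\frac{(2l-n)!}{(l-n)!\,n!}z^n$, so that the outgoing spherical Hankel function is $h_l^{(1)}(z)=z^{-l-1}p_l(z)e^{iz}$; $p_l'$ is the derivative of $p_l$. $G_l(z)=z\,\partial h_l^{(1)}(z)/h_l^{(1)}(z)$. *)

theory Defs
  imports "HOL-Analysis.Analysis"
begin

definition p_poly :: "nat \<Rightarrow> complex \<Rightarrow> complex" where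
  "p_poly l z = (\<Sum>n=0..l. (\<i> powi (- int n - 1) / 2 ^ (l - n))
      * (fact (2*l - n) / (fact (l - n) * fact n)) * z ^ n)"

definition hankel1 :: "nat \<Rightarrow> complex \<Rightarrow> complex" where
  "hankel1 l z = z powi (- int l - 1) * p_poly l z * exp (\<i> * z)"

definition G_fun :: "nat \<Rightarrow> complex \<Rightarrow> complex" where
  "G_fun l z = z * deriv (hankel1 l) z / hankel1 l z"

definition R_fun :: "nat \<Rightarrow> complex \<Rightarrow> complex" where
  "R_fun l z = 2 * \<i> * p_poly l z * p_poly l (-z)
     + deriv (p_poly l) z * p_poly l (-z) + deriv (p_poly l) (-z) * p_poly l z
     + 2 * \<i> * z ^ (2*l)"

end

theory Submission imports Defs "HOL-Computational_Algebra.Polynomial" begin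

definition acoef :: "nat \<Rightarrow> nat \<Rightarrow> complex" where
  "acoef l n = (\<i> powi (- int n - 1) / 2 ^ (l - n)) * (fact (2*l - n) / (fact (l - n) * fact n))"

definition Pp :: "nat \<Rightarrow> complex poly" where
  "Pp l = (\<Sum>n\<le>l. monom (acoef l n) n)"

lemma coeff_Pp: "coeff (Pp l) k = (if k \<le> l then acoef l k else 0)"
  unfolding Pp_def coeff_sum by (auto simp: coeff_monom)

lemma poly_Pp: "poly (Pp l) z = p_poly l z"
  unfolding Pp_def p_poly_def poly_sum poly_monom acoef_def
  by (simp add: atLeast0AtMost)

lemma rec_step:
  assumes "k < l"
  shows "of_nat (k+1) * (of_nat k - 2 * of_nat l) * acoef l (k+1) + 2 * \<i> * (of_nat k - of_nat l) * acoef l k = 0"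
proof -
  obtain d where l: "l = k + 1 + d" using assms by (metis add_Suc_right add_Suc_shift less_imp_Suc_add plus_1_eq_Suc add.commute)
  have e1: "l - k = Suc d" "l - (k+1) = d" "2*l - k = Suc (l + d)" "2*l - (k+1) = l + d" using l by auto
  have ip: "\<i> powi (- int (k+1) - 1) = - \<i> * \<i> powi (- int k - 1)"
  proof -
    have "\<i> powi (- int (k+1) - 1) = \<i> powi ((- int k - 1) + (-1))" by (simp add: algebra_simps)
    also have "\<dots> = \<i> powi (- int k - 1) * \<i> powi (-1)" by (rule power_int_add) auto
    finally show ?thesis by simp
  qed
  define F :: complex where "F = fact (l+d)"
  define x where "x = \<i> powi (- int k - 1)"
  have A1: "acoef l (k+1) = (-\<i>*x) / 2^d * (F / (fact d * (of_nat (k+1) * fact k)))"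
    unfolding acoef_def e1 ip F_def x_def by (simp add: fact_Suc)
  have A0: "acoef l k = x / (2*2^d) * (of_nat (Suc(l+d)) * F / ((of_nat (Suc d) * fact d) * fact k))"
    unfolding acoef_def e1 F_def x_def by (simp only: fact_Suc) simp
  have B1: "(of_nat k - 2 * of_nat l :: complex) = - of_nat (Suc (l+d))" using l by simp
  have B2: "(of_nat k - of_nat l :: complex) = - of_nat (Suc d)" using l by simp
  have nz2: "(1 + of_nat k :: complex) \<noteq> 0" "(1 + of_nat d :: complex) \<noteq> 0"
    by (metis add.commute of_nat_Suc of_nat_eq_0_iff nat.distinct(1))+
  have nz: "(fact d :: complex) \<noteq> 0" "(fact k :: complex) \<noteq> 0" "(of_nat (k+1) :: complex) \<noteq> 0"
     "(of_nat (Suc d) :: complex) \<noteq> 0" using nz2 by auto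
  show ?thesis unfolding A1 A0 B1 B2
    using nz nz2 by (simp add: field_simps del: of_nat_Suc)
qed

lemma coeff_ode: fixes P :: "complex poly"
  shows "coeff (pCons 0 (pderiv (pderiv P)) + [:- 2 * of_nat l, 2*\<i>:] * pderiv P - smult (2 * \<i> * of_nat l) P) n
   = of_nat (n+1) * (of_nat n - 2 * of_nat l) * coeff P (n+1) + 2 * \<i> * (of_nat n - of_nat l) * coeff P n"
  by (cases n) (simp_all add: coeff_pderiv algebra_simps)

lemma ode_P: "pCons 0 (pderiv (pderiv (Pp l))) + [:- 2 * of_nat l, 2*\<i>:] * pderiv (Pp l) - smult (2 * \<i> * of_nat l) (Pp l) = 0"
proof (subst poly_eq_iff, intro allI)
  fix n
  have "of_nat (n+1) * (of_nat n - 2 * of_nat l) * coeff (Pp l) (n+1) + 2 * \<i> * (of_nat n - of_nat l) * coeff (Pp l) n = 0"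
  proof (cases "n < l")
    case True then show ?thesis using rec_step[OF True] by (simp add: coeff_Pp)
  next
    case False
    then show ?thesis by (cases "n = l") (auto simp: coeff_Pp)
  qed
  then show "coeff (pCons 0 (pderiv (pderiv (Pp l))) + [:- 2 * of_nat l, 2*\<i>:] * pderiv (Pp l) - smult (2 * \<i> * of_nat l) (Pp l)) n = coeff 0 n"
    by (simp only: coeff_ode coeff_0)
qed


lemma degree_Pp: "degree (Pp l) = l" and lead_Pp: "lead_coeff (Pp l) = \<i> powi (- int l - 1)"
proof -
  have c: "coeff (Pp l) l = \<i> powi (- int l - 1)" by (simp add: coeff_Pp acoef_def mult_2)
  have "degree (Pp l) \<le> l" by (rule degree_le) (auto simp: coeff_Pp)
  moreover have "l \<le> degree (Pp l)" by (rule le_degree) (simp add: c)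
  ultimately show d: "degree (Pp l) = l" by simp
  show "lead_coeff (Pp l) = \<i> powi (- int l - 1)" using c d by simp
qed

lemma isq: "(\<i> powi (- int l - 1))^2 = (-1)^(l+1)"
proof -
  have e: "- int l - 1 = - int (l+1)" by simp
  have "\<i> powi (- int l - 1) = \<i> powi (- int (l+1))" by (rule arg_cong[OF e])
  also have "\<dots> = inverse (\<i> powi int (l+1))" by (rule power_int_minus)
  also have "\<dots> = inverse (\<i>^(l+1))" by (simp only: power_int_of_nat)
  finally have x: "\<i> powi (- int l - 1) = inverse (\<i>^(l+1))" .
  have m: "(-\<i>)^l * (-\<i>)^l = (-1::complex)^l" by (simp add: power_mult_distrib[symmetric])
  have "inverse (\<i>^(l+1)) = - \<i> * (-\<i>)^l" by (simp add: power_inverse[symmetric])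
  then show ?thesis unfolding x using m by (simp add: power2_eq_square algebra_simps)
qed


lemma ode_pt: "w * poly (pderiv (pderiv (Pp l))) w + (2 * \<i> * w - 2 * of_nat l) * poly (pderiv (Pp l)) w
   - 2 * \<i> * of_nat l * poly (Pp l) w = 0"
proof -
  have "poly (pCons 0 (pderiv (pderiv (Pp l))) + [:- 2 * of_nat l, 2*\<i>:] * pderiv (Pp l) - smult (2 * \<i> * of_nat l) (Pp l)) w = 0"
    by (simp only: ode_P poly_0)
  then show ?thesis by (simp add: algebra_simps)
qed

definition Qp :: "nat \<Rightarrow> complex poly" where "Qp l = pcompose (Pp l) [:0,-1:]"
definition Tp :: "nat \<Rightarrow> complex poly" where
  "Tp l = smult (2*\<i>) (Pp l * Qp l) + pderiv (Pp l) * Qp l - Pp l * pderiv (Qp l)"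

lemma poly_Qp: "poly (Qp l) z = poly (Pp l) (-z)"
  and poly_dQp: "poly (pderiv (Qp l)) z = - poly (pderiv (Pp l)) (-z)"
  and poly_ddQp: "poly (pderiv (pderiv (Qp l))) z = poly (pderiv (pderiv (Pp l))) (-z)"
  by (simp_all add: Qp_def poly_pcompose pderiv_pcompose pderiv_mult pderiv_pCons pderiv_minus)

lemma T_ode: "pCons 0 (pderiv (Tp l)) = smult (2 * of_nat l) (Tp l)"
proof (rule poly_eq_poly_eq_iff[THEN iffD1], rule ext)
  fix z :: complex
  define a where "a = poly (Pp l) z"
  define b where "b = poly (pderiv (Pp l)) z"
  define c where "c = poly (pderiv (pderiv (Pp l))) z"
  define A where "A = poly (Pp l) (-z)"
  define B where "B = poly (pderiv (Pp l)) (-z)"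
  define C where "C = poly (pderiv (pderiv (Pp l))) (-z)"
  have e1: "z * c + (2 * \<i> * z - 2 * of_nat l) * b - 2 * \<i> * of_nat l * a = 0"
    unfolding a_def b_def c_def by (rule ode_pt)
  have e2: "(-z) * C + (2 * \<i> * (-z) - 2 * of_nat l) * B - 2 * \<i> * of_nat l * A = 0"
    unfolding A_def B_def C_def by (rule ode_pt)
  have lhs: "poly (pCons 0 (pderiv (Tp l))) z = z * (2*\<i>*(b*A - a*B) + c*A - a*C)"
    unfolding Tp_def by (simp add: pderiv_mult pderiv_smult pderiv_add pderiv_diff poly_Qp poly_dQp poly_ddQp
       a_def b_def c_def A_def B_def C_def algebra_simps)
  have rhs: "poly (smult (2 * of_nat l) (Tp l)) z = 2 * of_nat l * (2*\<i>*a*A + b*A + a*B)"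
    unfolding Tp_def by (simp add: poly_Qp poly_dQp a_def b_def A_def B_def algebra_simps)
  have "z * (2*\<i>*(b*A - a*B) + c*A - a*C) - 2 * of_nat l * (2*\<i>*a*A + b*A + a*B)
      = A * (z * c + (2 * \<i> * z - 2 * of_nat l) * b - 2 * \<i> * of_nat l * a)
      + a * ((-z) * C + (2 * \<i> * (-z) - 2 * of_nat l) * B - 2 * \<i> * of_nat l * A)"
    by (simp add: algebra_simps)
  then show "poly (pCons 0 (pderiv (Tp l))) z = poly (smult (2 * of_nat l) (Tp l)) z"
    unfolding lhs rhs e1 e2 by simp
qed


lemma degree_Qp: "degree (Qp l) = l" and lead_Qp: "lead_coeff (Qp l) = \<i> powi (- int l - 1) * (-1)^l"
proof -
  show "degree (Qp l) = l" unfolding Qp_def by (simp add: degree_pcompose degree_Pp)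
  show "lead_coeff (Qp l) = \<i> powi (- int l - 1) * (-1)^l"
    unfolding Qp_def apply (subst lead_coeff_comp) apply simp
    using lead_Pp[of l] degree_Pp[of l] by simp
qed

lemma coeff_T_other: "k \<noteq> 2*l \<Longrightarrow> coeff (Tp l) k = 0"
proof -
  assume k: "k \<noteq> 2*l"
  have "coeff (pCons 0 (pderiv (Tp l))) k = coeff (smult (2 * of_nat l) (Tp l)) k"
    by (simp only: T_ode)
  then have "of_nat k * coeff (Tp l) k = 2 * of_nat l * coeff (Tp l) k"
    by (cases k) (simp_all add: coeff_pderiv)
  then have "(of_nat k - 2 * of_nat l) * coeff (Tp l) k = 0" by (simp add: algebra_simps)
  moreover have "(of_nat k - 2 * of_nat l :: complex) \<noteq> 0"
  proof
    assume "(of_nat k - 2 * of_nat l :: complex) = 0"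
    then have "(of_nat k :: complex) = of_nat (2*l)" by simp
    then have "k = 2*l" using of_nat_eq_iff by blast
    with k show False by simp
  qed
  ultimately show ?thesis by simp
qed

lemma coeff_T_top: "coeff (Tp l) (2*l) = - 2 * \<i>"
proof -
  have m: "coeff (Pp l * Qp l) (2*l) = \<i> powi (- int l - 1) * (\<i> powi (- int l - 1) * (-1)^l)"
  proof -
    have "coeff (Pp l) l = \<i> powi (- int l - 1)" using lead_Pp degree_Pp by metis
    moreover have "coeff (Qp l) l = \<i> powi (- int l - 1) * (-1)^l" using lead_Qp degree_Qp by metis
    ultimately show ?thesis using coeff_mult_degree_sum[of "Pp l" "Qp l"] by (simp add: degree_Pp degree_Qp mult_2)
  qed
  have z1: "coeff (pderiv (Pp l) * Qp l) (2*l) = 0"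
  proof (cases "l = 0")
    case True then show ?thesis using pderiv_eq_0_iff[of "Pp l"] by (simp add: degree_Pp)
  next
    case False
    have "degree (pderiv (Pp l) * Qp l) \<le> (l - 1) + l"
      using degree_mult_le[of "pderiv (Pp l)" "Qp l"] by (simp add: degree_pderiv degree_Pp degree_Qp)
    then show ?thesis using False by (intro coeff_eq_0) simp
  qed
  have z2: "coeff (Pp l * pderiv (Qp l)) (2*l) = 0"
  proof (cases "l = 0")
    case True then show ?thesis using pderiv_eq_0_iff[of "Qp l"] by (simp add: degree_Qp)
  next
    case False
    have "degree (Pp l * pderiv (Qp l)) \<le> l + (l - 1)"
      using degree_mult_le[of "Pp l" "pderiv (Qp l)"] by (simp add: degree_pderiv degree_Pp degree_Qp)
    then show ?thesis using False by (intro coeff_eq_0) simp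
  qed
  have "\<i> powi (- int l - 1) * (\<i> powi (- int l - 1) * (-1)^l) = (\<i> powi (- int l - 1))^2 * (-1)^l"
    by (simp add: power2_eq_square)
  also have "\<dots> = -1" unfolding isq by (simp add: power_add[symmetric] flip: power_mult_distrib)
  finally have "coeff (Pp l * Qp l) (2*l) = -1" using m by simp
  then show ?thesis unfolding Tp_def using z1 z2 by simp
qed

lemma T_eq: "poly (Tp l) z = - 2 * \<i> * z ^ (2*l)"
proof -
  have "Tp l = monom (- 2 * \<i>) (2*l)"
    by (rule poly_eqI) (auto simp: coeff_T_other coeff_T_top)
  then show ?thesis by (simp add: poly_monom)
qed

lemma deriv_p: "deriv (p_poly l) w = poly (pderiv (Pp l)) w"
proof -
  have "p_poly l = poly (Pp l)" by (rule ext) (simp add: poly_Pp)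
  then show ?thesis by (simp add: DERIV_imp_deriv)
qed

lemma R_zero: "R_fun l z = 0"
proof -
  have "poly (Tp l) z = 2 * \<i> * p_poly l z * p_poly l (-z)
     + deriv (p_poly l) z * p_poly l (-z) + deriv (p_poly l) (-z) * p_poly l z"
    unfolding Tp_def deriv_p by (simp add: poly_Qp poly_dQp poly_Pp algebra_simps)
  then have "2 * \<i> * p_poly l z * p_poly l (-z)
     + deriv (p_poly l) z * p_poly l (-z) + deriv (p_poly l) (-z) * p_poly l z = - 2 * \<i> * z ^ (2*l)"
    unfolding T_eq by simp
  then show ?thesis unfolding R_fun_def by simp
qed


lemma hankel_eq: "hankel1 l = (\<lambda>w. poly (Pp l) w * exp (\<i>*w) / w^Suc l)"
proof (rule ext)
  fix w :: complex
  have e: "- int l - 1 = - int (Suc l)" by simp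
  have "w powi (- int l - 1) = w powi (- int (Suc l))" by (rule arg_cong[OF e])
  also have "\<dots> = inverse (w powi int (Suc l))" by (rule power_int_minus)
  also have "\<dots> = inverse (w^Suc l)" by (simp only: power_int_of_nat)
  finally show "hankel1 l w = poly (Pp l) w * exp (\<i>*w) / w^Suc l"
    unfolding hankel1_def poly_Pp by (simp add: divide_inverse)
qed

lemma G_formula:
  assumes z: "z \<noteq> 0" and a: "p_poly l z \<noteq> 0"
  shows "G_fun l z = z * deriv (p_poly l) z / p_poly l z + \<i> * z - of_nat (Suc l)"
proof -
  define a where "a = poly (Pp l) z"
  define b where "b = poly (pderiv (Pp l)) z"
  define e where "e = exp (\<i>*z)"
  have dp: "(poly (Pp l) has_field_derivative b) (at z)" unfolding b_def by (rule poly_DERIV)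
  have de: "((\<lambda>w. exp (\<i>*w)) has_field_derivative \<i> * e) (at z)"
    unfolding e_def by (auto intro!: derivative_eq_intros)
  have dpow: "((\<lambda>w. w^Suc l) has_field_derivative of_nat (Suc l) * z^l) (at z)"
    using DERIV_power[OF DERIV_ident, of "Suc l" z UNIV] by simp
  have D: "(hankel1 l has_field_derivative
      ((b * e + \<i> * e * a) * z^Suc l - a * e * (of_nat (Suc l) * z^l)) / (z^Suc l * z^Suc l)) (at z)"
    unfolding hankel_eq using DERIV_divide[OF DERIV_mult[OF dp de] dpow] z
    by (simp add: a_def e_def)
  have h: "hankel1 l z = a * e / z^Suc l" unfolding hankel_eq a_def e_def by simp
  have anz: "a \<noteq> 0" using a by (simp add: a_def poly_Pp)
  have enz: "e \<noteq> 0" unfolding e_def by simp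
  have "G_fun l z = z * (((b * e + \<i> * e * a) * z^Suc l - a * e * (of_nat (Suc l) * z^l)) / (z^Suc l * z^Suc l)) / (a * e / z^Suc l)"
    unfolding G_fun_def h using DERIV_imp_deriv[OF D] by simp
  also have "\<dots> = z * b / a + \<i> * z - of_nat (Suc l)"
    using z anz enz by (simp add: field_simps)
  finally show ?thesis by (simp add: deriv_p a_def b_def poly_Pp)
qed


theorem lemma8p4:
  fixes l :: nat
  shows "(\<forall>z. R_fun l z = 0) \<and>
    (\<forall>z. z \<noteq> 0 \<and> p_poly l z \<noteq> 0 \<and> p_poly l (-z) \<noteq> 0 \<longrightarrow>
        G_fun l z - G_fun l (-z) = - 2 * \<i> * z ^ (2*l+1) * (1 / (p_poly l z * p_poly l (-z))))"
proof (intro conjI allI impI)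
  fix z show "R_fun l z = 0" by (rule R_zero)
next
  fix z :: complex
  assume h: "z \<noteq> 0 \<and> p_poly l z \<noteq> 0 \<and> p_poly l (-z) \<noteq> 0"
  define a where "a = p_poly l z"
  define A where "A = p_poly l (-z)"
  define b where "b = deriv (p_poly l) z"
  define B where "B = deriv (p_poly l) (-z)"
  have anz: "a \<noteq> 0" "A \<noteq> 0" and z: "z \<noteq> 0" using h by (auto simp: a_def A_def)
  have R: "2 * \<i> * a * A + b * A + B * a = - 2 * \<i> * z ^ (2*l)"
    using R_zero[of l z] unfolding R_fun_def a_def A_def b_def B_def
    by (simp add: algebra_simps eq_neg_iff_add_eq_0)
  have "G_fun l z - G_fun l (-z) = (z * b / a + \<i> * z - of_nat (Suc l)) - ((-z) * B / A + \<i> * (-z) - of_nat (Suc l))"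
    using G_formula[of z l] G_formula[of "-z" l] h unfolding a_def A_def b_def B_def by simp
  also have "\<dots> = z * (2 * \<i> * a * A + b * A + B * a) / (a * A)"
    using anz by (simp add: field_simps)
  also have "\<dots> = - 2 * \<i> * z ^ (2*l+1) * (1 / (a * A))"
    unfolding R by (simp add: field_simps)
  finally show "G_fun l z - G_fun l (-z) = - 2 * \<i> * z ^ (2*l+1) * (1 / (p_poly l z * p_poly l (-z)))"
    by (simp add: a_def A_def)
qed

end
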